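(* For any commutative Noetherian ring $R$ with unity, $\Gamma_E(R)$ is not a cycle graph.
   Context: For $x,y\in R$ write $x\sim y$ iff $\operatorname{ann}(x)=\operatorname{ann}(y)$; $[x]$ denotes the equivalence class of $x$. Let $Z^*(R)$ be the set of nonzero zero divisors of $R$. The graph $\Gamma_E(R)$ is the simple graph whose vertices are the classes $[x]$ with $x\in Z^*(R)$, two distinct vertices $[x],[y]$ being adjacent iff $xy=0$. A cycle graph is an $n$-gon, $n\ge 3$: a graph on vertices $v_1,\dots,v_n$ whose only edges are $v_iv_{i+1}$ ($1\le i<n$) and $v_nv_1$. *)

theory Defs
  imports "HOL-Algebra.Ring_Divisibility"
begin

definition ann :: "('a, 'b) ring_scheme \<Rightarrow> 'a \<Rightarrow> 'a set" where
  "ann R x = {y \<in> carrier R. x \<otimes>\<^bsub>R\<^esub> y = \<zero>\<^bsub>R\<^esub>}"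

definition nz_zero_divisors :: "('a, 'b) ring_scheme \<Rightarrow> 'a set" where
  "nz_zero_divisors R = {x \<in> carrier R. x \<noteq> \<zero>\<^bsub>R\<^esub> \<and>
      (\<exists>y \<in> carrier R. y \<noteq> \<zero>\<^bsub>R\<^esub> \<and> x \<otimes>\<^bsub>R\<^esub> y = \<zero>\<^bsub>R\<^esub>)}"

definition ann_class :: "('a, 'b) ring_scheme \<Rightarrow> 'a \<Rightarrow> 'a set" where
  "ann_class R x = {y \<in> carrier R. ann R y = ann R x}"

definition GammaE_vertices :: "('a, 'b) ring_scheme \<Rightarrow> 'a set set" where
  "GammaE_vertices R = ann_class R ` nz_zero_divisors R"

text \<open>Adjacency of Gamma_E(R): distinct vertices [x],[y] adjacent iff xy = 0
  (independent of representatives).\<close>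
definition GammaE_adj :: "('a, 'b) ring_scheme \<Rightarrow> 'a set \<Rightarrow> 'a set \<Rightarrow> bool" where
  "GammaE_adj R A B \<longleftrightarrow> A \<in> GammaE_vertices R \<and> B \<in> GammaE_vertices R \<and> A \<noteq> B \<and>
      (\<exists>x \<in> nz_zero_divisors R. \<exists>y \<in> nz_zero_divisors R.
          A = ann_class R x \<and> B = ann_class R y \<and> x \<otimes>\<^bsub>R\<^esub> y = \<zero>\<^bsub>R\<^esub>)"

definition is_cycle_graph :: "'v set \<Rightarrow> ('v \<Rightarrow> 'v \<Rightarrow> bool) \<Rightarrow> bool" where
  "is_cycle_graph V E \<longleftrightarrow> (\<exists>n v. n \<ge> 3 \<and> bij_betw v {..<n} V \<and>
      (\<forall>i<n. \<forall>j<n. E (v i) (v j) \<longleftrightarrow> (j = Suc i mod n \<or> i = Suc j mod n)))"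

end

theory Submission
  imports Defs
begin

lemma L1:
  fixes R :: "('a, 'b) ring_scheme" (structure)
  assumes "x \<in> carrier R" "y \<in> carrier R"
  shows "ann_class R x = ann_class R y \<longleftrightarrow> ann R x = ann R y"
proof
  assume "ann_class R x = ann_class R y"
  moreover have "x \<in> ann_class R x" using assms unfolding ann_class_def by auto
  ultimately show "ann R x = ann R y" unfolding ann_class_def by auto
qed (auto simp: ann_class_def)

lemma nzzd_carrier:
  fixes R :: "('a, 'b) ring_scheme" (structure)
  shows "x \<in> nz_zero_divisors R \<Longrightarrow> x \<in> carrier R \<and> x \<noteq> \<zero>"
  unfolding nz_zero_divisors_def by auto

lemma L2:
  fixes R :: "('a, 'b) ring_scheme" (structure)
  assumes R: "cring R" and x: "x \<in> nz_zero_divisors R" and y: "y \<in> nz_zero_divisors R"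
    and adj: "GammaE_adj R (ann_class R x) (ann_class R y)"
  shows "x \<otimes> y = \<zero>"
proof -
  interpret cring R by fact
  obtain x' y' where x': "x' \<in> nz_zero_divisors R" and y': "y' \<in> nz_zero_divisors R"
    and ex: "ann_class R x = ann_class R x'" and ey: "ann_class R y = ann_class R y'"
    and p: "x' \<otimes> y' = \<zero>"
    using adj unfolding GammaE_adj_def by (elim conjE bexE) auto
  have cx: "x \<in> carrier R" "x' \<in> carrier R" "y \<in> carrier R" "y' \<in> carrier R"
    using nzzd_carrier[OF x] nzzd_carrier[OF y] nzzd_carrier[OF x'] nzzd_carrier[OF y'] by auto
  have ax: "ann R x = ann R x'" using L1[of x R x'] ex cx by simp
  have ay: "ann R y = ann R y'" using L1[of y R y'] ey cx by simp
  have "y' \<in> ann R x'" using p cx unfolding ann_def by simp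
  hence "y' \<in> ann R x" using ax by simp
  hence "x \<otimes> y' = \<zero>" unfolding ann_def by simp
  hence "y' \<otimes> x = \<zero>" using cx m_comm[of x y'] by simp
  hence "x \<in> ann R y'" using cx unfolding ann_def by simp
  hence "x \<in> ann R y" using ay by simp
  hence "y \<otimes> x = \<zero>" unfolding ann_def by simp
  thus ?thesis using cx m_comm[of x y] by simp
qed

lemma L3:
  fixes R :: "('a, 'b) ring_scheme" (structure)
  assumes x: "x \<in> nz_zero_divisors R" and y: "y \<in> nz_zero_divisors R"
    and ne: "ann_class R x \<noteq> ann_class R y" and p: "x \<otimes> y = \<zero>"
  shows "GammaE_adj R (ann_class R x) (ann_class R y)"
proof -
  have "ann_class R x \<in> GammaE_vertices R"
    unfolding GammaE_vertices_def by (rule imageI[OF x])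
  moreover have "ann_class R y \<in> GammaE_vertices R"
    unfolding GammaE_vertices_def by (rule imageI[OF y])
  ultimately show ?thesis unfolding GammaE_adj_def using x y ne p by blast
qed

lemma L4:
  fixes R :: "('a, 'b) ring_scheme" (structure)
  assumes "cring R" "y \<in> carrier R" "y \<noteq> \<zero>" "a \<in> carrier R" "a \<noteq> \<zero>" "a \<otimes> y = \<zero>"
  shows "y \<in> nz_zero_divisors R"
proof -
  interpret cring R by fact
  have "y \<otimes> a = \<zero>" using m_comm[of y a] assms by simp
  thus ?thesis using assms unfolding nz_zero_divisors_def by blast
qed

lemma C4LEM:
  fixes R :: "('a, 'b) ring_scheme" (structure)
  assumes R: "cring R" and c: "a \<in> carrier R" "x \<in> carrier R" "b \<in> carrier R" "cc \<in> carrier R"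
    and h: "a \<otimes> a = \<zero>" "x \<otimes> x = \<zero>" "a \<otimes> x = \<zero>" "a \<otimes> cc = \<zero>" "x \<otimes> b = \<zero>"
      "a \<otimes> b \<noteq> \<zero>" "x \<otimes> cc \<noteq> \<zero>"
    and H: "a \<oplus> x \<in> nz_zero_divisors R \<Longrightarrow>
      \<exists>e\<in>{a,x,b,cc}. \<forall>w\<in>carrier R. (a \<oplus> x) \<otimes> w = \<zero> \<longleftrightarrow> e \<otimes> w = \<zero>"
  shows False
proof -
  interpret cring R by fact
  let ?s = "a \<oplus> x"
  have s: "?s \<in> carrier R" using c by auto
  have sc: "?s \<otimes> cc = x \<otimes> cc" using c h by (simp add: l_distr)
  have sb: "?s \<otimes> b = a \<otimes> b" using c h by (simp add: l_distr)
  have sa: "?s \<otimes> a = \<zero>"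
  proof -
    have "?s \<otimes> a = a \<otimes> a \<oplus> x \<otimes> a" using c by (simp add: l_distr)
    also have "x \<otimes> a = a \<otimes> x" using c by (simp add: m_comm)
    finally show ?thesis using h c by simp
  qed
  have sx: "?s \<otimes> x = \<zero>" using c h by (simp add: l_distr)
  have "?s \<noteq> \<zero>" using sc h c by auto
  moreover have "a \<noteq> \<zero>" using h c by auto
  ultimately have "?s \<in> nz_zero_divisors R"
  proof -
    assume "?s \<noteq> \<zero>" "a \<noteq> \<zero>"
    moreover have "a \<otimes> ?s = \<zero>" using m_comm[of a ?s] sa c s by simp
    ultimately show ?thesis using L4[OF R s _ c(1)] by blast
  qed
  then obtain e where e: "e \<in> {a,x,b,cc}" and ee: "\<forall>w\<in>carrier R. ?s \<otimes> w = \<zero> \<longleftrightarrow> e \<otimes> w = \<zero>"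
    using H by blast
  have ea: "?s \<otimes> a = \<zero> \<longleftrightarrow> e \<otimes> a = \<zero>" using bspec[OF ee c(1)] .
  have ex: "?s \<otimes> x = \<zero> \<longleftrightarrow> e \<otimes> x = \<zero>" using bspec[OF ee c(2)] .
  have eb: "?s \<otimes> b = \<zero> \<longleftrightarrow> e \<otimes> b = \<zero>" using bspec[OF ee c(3)] .
  have ec: "?s \<otimes> cc = \<zero> \<longleftrightarrow> e \<otimes> cc = \<zero>" using bspec[OF ee c(4)] .
  have ba: "b \<otimes> a \<noteq> \<zero>" using m_comm[of b a] c h by simp
  have cx: "cc \<otimes> x \<noteq> \<zero>" using m_comm[of cc x] c h by simp
  show False using e ea ex eb ec sa sx sb sc h ba cx by auto
qed

lemma TRI1:
  fixes R :: "('a, 'b) ring_scheme" (structure)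
  assumes R: "cring R" and c: "a \<in> carrier R" "b \<in> carrier R" "cc \<in> carrier R"
    and h: "a \<otimes> b = \<zero>" "a \<otimes> cc = \<zero>" "b \<otimes> cc = \<zero>" "a \<otimes> a \<noteq> \<zero>" "b \<otimes> b \<noteq> \<zero>" "cc \<noteq> \<zero>"
    and H: "a \<oplus> b \<in> nz_zero_divisors R \<Longrightarrow>
      \<exists>e\<in>{a,b,cc}. \<forall>w\<in>carrier R. (a \<oplus> b) \<otimes> w = \<zero> \<longleftrightarrow> e \<otimes> w = \<zero>"
  shows False
proof -
  interpret cring R by fact
  let ?s = "a \<oplus> b"
  have s: "?s \<in> carrier R" using c by auto
  have ba: "b \<otimes> a = \<zero>" using c h m_comm[of b a] by simp
  have sa: "?s \<otimes> a = a \<otimes> a" using c h ba by (simp add: l_distr)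
  have sb: "?s \<otimes> b = b \<otimes> b" using c h by (simp add: l_distr)
  have sc: "?s \<otimes> cc = \<zero>" using c h by (simp add: l_distr)
  have "?s \<noteq> \<zero>" using sa h c by auto
  have "a \<noteq> \<zero>" using h c by auto
  have "?s \<in> nz_zero_divisors R"
  proof -
    have "cc \<otimes> ?s = \<zero>" using m_comm[of cc ?s] sc c s by simp
    thus ?thesis using L4[OF R s \<open>?s \<noteq> \<zero>\<close> c(3) h(6)] by blast
  qed
  then obtain e where e: "e \<in> {a,b,cc}" and ee: "\<forall>w\<in>carrier R. ?s \<otimes> w = \<zero> \<longleftrightarrow> e \<otimes> w = \<zero>"
    using H by blast
  have ea: "?s \<otimes> a = \<zero> \<longleftrightarrow> e \<otimes> a = \<zero>" using bspec[OF ee c(1)] .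
  have eb: "?s \<otimes> b = \<zero> \<longleftrightarrow> e \<otimes> b = \<zero>" using bspec[OF ee c(2)] .
  have ca: "cc \<otimes> a = \<zero>" using m_comm[of cc a] c h by simp
  show False using e ea eb sa sb h ba ca by auto
qed

lemma suc_mod: "i < (n::nat) \<Longrightarrow> Suc i mod n = (if Suc i = n then 0 else Suc i)"
  by auto

theorem proposition1p8:
  fixes R :: "('a, 'b) ring_scheme" (structure)
  assumes "cring R" and "noetherian_ring R"
  shows "\<not> is_cycle_graph (GammaE_vertices R) (GammaE_adj R)"
proof
  interpret cring R by fact
  have cR: "cring R" by fact
  assume "is_cycle_graph (GammaE_vertices R) (GammaE_adj R)"
  then obtain n v where n3: "n \<ge> 3" and bij: "bij_betw v {..<n} (GammaE_vertices R)"
    and E: "\<forall>i<n. \<forall>j<n. GammaE_adj R (v i) (v j) \<longleftrightarrow> (j = Suc i mod n \<or> i = Suc j mod n)"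
    unfolding is_cycle_graph_def by blast
  define Z where "Z = nz_zero_divisors R"
  have "\<forall>i. \<exists>z. i<n \<longrightarrow> z \<in> Z \<and> v i = ann_class R z"
  proof
    fix i
    show "\<exists>z. i<n \<longrightarrow> z \<in> Z \<and> v i = ann_class R z"
    proof (cases "i<n")
      case True
      hence "v i \<in> ann_class R ` Z" using bij unfolding bij_betw_def GammaE_vertices_def Z_def by auto
      thus ?thesis by auto
    qed simp
  qed
  from choice[OF this] obtain r where r0: "\<forall>i. i<n \<longrightarrow> r i \<in> Z \<and> v i = ann_class R (r i)" by blast
  have r: "\<And>i. i<n \<Longrightarrow> r i \<in> Z \<and> v i = ann_class R (r i)" using r0 by blast
  have rc: "r i \<in> carrier R" and rnz: "r i \<noteq> \<zero>" if "i<n" for i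
    using nzzd_carrier[of "r i" R] r[OF that] unfolding Z_def by simp_all
  have inj: "i = j" if "i<n" "j<n" "v i = v j" for i j
    using bij that unfolding bij_betw_def inj_on_def by simp
  have F1: "r i \<otimes> r j = \<zero> \<longleftrightarrow> (j = Suc i mod n \<or> i = Suc j mod n)"
    if ij: "i<n" "j<n" "i\<noteq>j" for i j
  proof -
    have ne: "v i \<noteq> v j" using inj ij by blast
    have ri: "r i \<in> nz_zero_divisors R" "v i = ann_class R (r i)" using r[OF ij(1)] unfolding Z_def by simp_all
    have rj: "r j \<in> nz_zero_divisors R" "v j = ann_class R (r j)" using r[OF ij(2)] unfolding Z_def by simp_all
    have "GammaE_adj R (v i) (v j) \<longleftrightarrow> r i \<otimes> r j = \<zero>"
    proof
      assume "GammaE_adj R (v i) (v j)"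
      thus "r i \<otimes> r j = \<zero>" using L2[OF cR ri(1) rj(1)] ri(2) rj(2) by simp
    next
      assume "r i \<otimes> r j = \<zero>"
      thus "GammaE_adj R (v i) (v j)" using L3[OF ri(1) rj(1)] ri(2) rj(2) ne by simp
    qed
    thus ?thesis using E[rule_format, OF ij(1) ij(2)] by simp
  qed
  have F2: "\<exists>k<n. \<forall>w\<in>carrier R. z \<otimes> w = \<zero> \<longleftrightarrow> r k \<otimes> w = \<zero>" if z: "z \<in> Z" for z
  proof -
    have "ann_class R z \<in> GammaE_vertices R" using z unfolding GammaE_vertices_def Z_def by blast
    hence "ann_class R z \<in> v ` {..<n}" using bij unfolding bij_betw_def by simp
    then obtain k where k: "k<n" "v k = ann_class R z" by auto
    have zc: "z \<in> carrier R" using nzzd_carrier[of z R] z unfolding Z_def by simp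
    have "ann_class R z = ann_class R (r k)" using k r[OF k(1)] by simp
    hence az: "ann R z = ann R (r k)" using L1[of z R "r k"] zc rc[OF k(1)] by simp
    have "z \<otimes> w = \<zero> \<longleftrightarrow> r k \<otimes> w = \<zero>" if w: "w \<in> carrier R" for w
    proof -
      have "z \<otimes> w = \<zero> \<longleftrightarrow> w \<in> ann R z" using w unfolding ann_def by simp
      also have "\<dots> \<longleftrightarrow> w \<in> ann R (r k)" using az by simp
      also have "\<dots> \<longleftrightarrow> r k \<otimes> w = \<zero>" using w unfolding ann_def by simp
      finally show ?thesis .
    qed
    thus ?thesis using k by blast
  qed
  have F3: "i = j" if ij: "i<n" "j<n" and a: "ann R (r i) = ann R (r j)" for i j
  proof -
    have "ann_class R (r i) = ann_class R (r j)" using L1[of "r i" R "r j"] rc[OF ij(1)] rc[OF ij(2)] a by blast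
    hence "v i = v j" using r ij by simp
    thus ?thesis using inj ij by blast
  qed
  have SUB: "ann R (r p) \<subseteq> ann R (r q)"
    if pq: "p<n" "q<n" and H: "\<forall>k<n. r k \<otimes> r p = \<zero> \<longrightarrow> r k \<otimes> r q = \<zero>" for p q
  proof
    fix y assume y: "y \<in> ann R (r p)"
    hence yc: "y \<in> carrier R" and py: "r p \<otimes> y = \<zero>" unfolding ann_def by auto
    show "y \<in> ann R (r q)"
    proof (cases "y = \<zero>")
      case True thus ?thesis using rc pq unfolding ann_def by auto
    next
      case False
      hence "y \<in> Z" using L4[OF cR yc False, of "r p"] rc rnz pq py unfolding Z_def by blast
      then obtain k where k: "k<n" "\<forall>w\<in>carrier R. y \<otimes> w = \<zero> \<longleftrightarrow> r k \<otimes> w = \<zero>"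
        using F2 by blast
      have "y \<otimes> r p = \<zero>" using py m_comm[of y "r p"] yc rc[OF pq(1)] by simp
      hence "r k \<otimes> r p = \<zero>" using k rc pq by blast
      hence "r k \<otimes> r q = \<zero>" using H k by blast
      hence "y \<otimes> r q = \<zero>" using k rc pq by blast
      hence "r q \<otimes> y = \<zero>" using m_comm[of y "r q"] yc rc[OF pq(2)] by simp
      thus ?thesis using yc unfolding ann_def by auto
    qed
  qed
  have C: "n = 3 \<or> n = 4 \<or> n \<ge> 5" using n3 by arith
  moreover
  { assume n5: "n \<ge> 5"
    have lt: "0<n" "1<n" "2<n" "3<n" "n-1<n" using n5 by auto
    have p01: "r 0 \<otimes> r 1 = \<zero>" using F1[of 0 1] n5 by simp
    have p12: "r 1 \<otimes> r 2 = \<zero>" using F1[of 1 2] n5 by simp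
    have p23: "r 2 \<otimes> r 3 = \<zero>" using F1[of 2 3] n5 by simp
    have p0m: "r 0 \<otimes> r (n-1) = \<zero>" using F1[of 0 "n-1"] n5 by (simp add: suc_mod)
    have p02: "r 0 \<otimes> r 2 \<noteq> \<zero>" using F1[of 0 2] n5 by (simp add: suc_mod)
    let ?ab = "r 0 \<otimes> r 2"
    have abc: "?ab \<in> carrier R" using rc lt by auto
    have "r 1 \<otimes> ?ab = \<zero>"
    proof -
      have "r 1 \<otimes> ?ab = r 0 \<otimes> (r 1 \<otimes> r 2)" using rc lt by (simp add: m_ac)
      thus ?thesis using p12 rc lt by simp
    qed
    hence "?ab \<in> Z" using L4[OF cR abc p02, of "r 1"] rc rnz lt unfolding Z_def by blast
    then obtain k where k: "k<n" "\<forall>w\<in>carrier R. ?ab \<otimes> w = \<zero> \<longleftrightarrow> r k \<otimes> w = \<zero>"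
      using F2 by blast
    have "?ab \<otimes> r 1 = r 0 \<otimes> (r 1 \<otimes> r 2)" using rc lt by (simp add: m_ac)
    hence "?ab \<otimes> r 1 = \<zero>" using p12 rc lt by simp
    hence k1: "r k \<otimes> r 1 = \<zero>" using k rc lt by blast
    have "?ab \<otimes> r 3 = r 0 \<otimes> (r 2 \<otimes> r 3)" using rc lt by (simp add: m_ac)
    hence "?ab \<otimes> r 3 = \<zero>" using p23 rc lt by simp
    hence k3: "r k \<otimes> r 3 = \<zero>" using k rc lt by blast
    have "?ab \<otimes> r (n-1) = r 2 \<otimes> (r 0 \<otimes> r (n-1))" using rc lt by (simp add: m_ac)
    hence "?ab \<otimes> r (n-1) = \<zero>" using p0m rc lt by simp
    hence km: "r k \<otimes> r (n-1) = \<zero>" using k rc lt by blast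
    have a1: "k \<noteq> 1 \<Longrightarrow> 1 = Suc k mod n \<or> k = Suc 1 mod n" using F1[of k 1] k1 k lt by blast
    have a3: "k \<noteq> 3 \<Longrightarrow> 3 = Suc k mod n \<or> k = Suc 3 mod n" using F1[of k 3] k3 k lt by blast
    have am: "k \<noteq> n-1 \<Longrightarrow> n-1 = Suc k mod n \<or> k = Suc (n-1) mod n" using F1[of k "n-1"] km k lt by blast
    have m: "Suc k mod n = (if Suc k = n then 0 else Suc k)" using suc_mod[OF k(1)] .
    have e: "Suc 1 mod n = 2" "Suc 3 mod n = 4" "Suc (n-1) mod n = 0" using n5 by auto
    have b1: "k \<noteq> 1 \<longrightarrow> 1 = (if Suc k = n then 0 else Suc k) \<or> k = 2" using a1 unfolding m e by blast
    have b3: "k \<noteq> 3 \<longrightarrow> 3 = (if Suc k = n then 0 else Suc k) \<or> k = 4" using a3 unfolding m e by blast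
    have bm: "k \<noteq> n-1 \<longrightarrow> n-1 = (if Suc k = n then 0 else Suc k) \<or> k = 0" using am unfolding m e by blast
    have False using b1 b3 bm k(1) n5 by (simp split: if_splits; presburger)
  }
  moreover
  { assume n4: "n = 4"
    have lt: "0<n" "1<n" "2<n" "3<n" using n4 by auto
    have p: "r 0 \<otimes> r 1 = \<zero>" "r 1 \<otimes> r 0 = \<zero>" "r 1 \<otimes> r 2 = \<zero>" "r 2 \<otimes> r 1 = \<zero>"
      "r 2 \<otimes> r 3 = \<zero>" "r 3 \<otimes> r 2 = \<zero>" "r 3 \<otimes> r 0 = \<zero>" "r 0 \<otimes> r 3 = \<zero>"
      "r 0 \<otimes> r 2 \<noteq> \<zero>" "r 2 \<otimes> r 0 \<noteq> \<zero>" "r 1 \<otimes> r 3 \<noteq> \<zero>" "r 3 \<otimes> r 1 \<noteq> \<zero>"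
      using F1[of 0 1] F1[of 1 0] F1[of 1 2] F1[of 2 1] F1[of 2 3] F1[of 3 2] F1[of 3 0] F1[of 0 3]
        F1[of 0 2] F1[of 2 0] F1[of 1 3] F1[of 3 1] n4 by simp_all
    have k4: "\<And>k. k < 4 \<Longrightarrow> k = 0 \<or> k = 1 \<or> k = 2 \<or> k = (3::nat)" by arith
    have sq02: "r 0 \<otimes> r 0 = \<zero> \<or> r 2 \<otimes> r 2 = \<zero>"
    proof (rule ccontr)
      assume h: "\<not> ?thesis"
      have "ann R (r 0) \<subseteq> ann R (r 2)"
      proof (rule SUB)
        show "0<n" "2<n" using lt by auto
        show "\<forall>k<n. r k \<otimes> r 0 = \<zero> \<longrightarrow> r k \<otimes> r 2 = \<zero>"
        proof (intro allI impI)
          fix k assume kk: "k<n" "r k \<otimes> r 0 = \<zero>"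
          hence "k=0 \<or> k=1 \<or> k=2 \<or> k=3" using n4 by arith
          thus "r k \<otimes> r 2 = \<zero>" using kk p h by auto
        qed
      qed
      moreover have "ann R (r 2) \<subseteq> ann R (r 0)"
      proof (rule SUB)
        show "2<n" "0<n" using lt by auto
        show "\<forall>k<n. r k \<otimes> r 2 = \<zero> \<longrightarrow> r k \<otimes> r 0 = \<zero>"
        proof (intro allI impI)
          fix k assume kk: "k<n" "r k \<otimes> r 2 = \<zero>"
          hence "k=0 \<or> k=1 \<or> k=2 \<or> k=3" using n4 by arith
          thus "r k \<otimes> r 0 = \<zero>" using kk p h by auto
        qed
      qed
      ultimately show False using F3[of 0 2] lt by auto
    qed
    have sq13: "r 1 \<otimes> r 1 = \<zero> \<or> r 3 \<otimes> r 3 = \<zero>"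
    proof (rule ccontr)
      assume h: "\<not> ?thesis"
      have "ann R (r 1) \<subseteq> ann R (r 3)"
      proof (rule SUB)
        show "1<n" "3<n" using lt by auto
        show "\<forall>k<n. r k \<otimes> r 1 = \<zero> \<longrightarrow> r k \<otimes> r 3 = \<zero>"
        proof (intro allI impI)
          fix k assume kk: "k<n" "r k \<otimes> r 1 = \<zero>"
          hence "k=0 \<or> k=1 \<or> k=2 \<or> k=3" using n4 by arith
          thus "r k \<otimes> r 3 = \<zero>" using kk p h by auto
        qed
      qed
      moreover have "ann R (r 3) \<subseteq> ann R (r 1)"
      proof (rule SUB)
        show "3<n" "1<n" using lt by auto
        show "\<forall>k<n. r k \<otimes> r 3 = \<zero> \<longrightarrow> r k \<otimes> r 1 = \<zero>"
        proof (intro allI impI)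
          fix k assume kk: "k<n" "r k \<otimes> r 3 = \<zero>"
          hence "k=0 \<or> k=1 \<or> k=2 \<or> k=3" using n4 by arith
          thus "r k \<otimes> r 1 = \<zero>" using kk p h by auto
        qed
      qed
      ultimately show False using F3[of 1 3] lt by auto
    qed
    have H: "\<exists>e\<in>{r 0, r 1, r 2, r 3}. \<forall>w\<in>carrier R. s \<otimes> w = \<zero> \<longleftrightarrow> e \<otimes> w = \<zero>"
      if sZ: "s \<in> nz_zero_divisors R" for s
    proof -
      obtain k where "k<n" "\<forall>w\<in>carrier R. s \<otimes> w = \<zero> \<longleftrightarrow> r k \<otimes> w = \<zero>"
        using F2[of s] sZ unfolding Z_def by blast
      thus ?thesis using k4 n4 by auto
    qed
    have rcs: "r 0 \<in> carrier R" "r 1 \<in> carrier R" "r 2 \<in> carrier R" "r 3 \<in> carrier R"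
      using rc lt by auto
    have False
      using sq02 sq13
    proof (elim disjE)
      assume "r 0 \<otimes> r 0 = \<zero>" "r 1 \<otimes> r 1 = \<zero>"
      thus False using C4LEM[OF cR rcs(1,2,3,4)] p H by blast
    next
      assume "r 0 \<otimes> r 0 = \<zero>" "r 3 \<otimes> r 3 = \<zero>"
      thus False using C4LEM[OF cR rcs(1,4,3,2)] p H by blast
    next
      assume "r 2 \<otimes> r 2 = \<zero>" "r 1 \<otimes> r 1 = \<zero>"
      thus False using C4LEM[OF cR rcs(3,2,1,4)] p H by blast
    next
      assume "r 2 \<otimes> r 2 = \<zero>" "r 3 \<otimes> r 3 = \<zero>"
      thus False using C4LEM[OF cR rcs(3,4,1,2)] p H by blast
    qed
  }
  moreover
  { assume n3': "n = 3"
    have lt: "0<n" "1<n" "2<n" using n3' by auto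
    have P: "r i \<otimes> r j = \<zero>" if "i<3" "j<3" "i\<noteq>j" for i j
    proof -
      have "j = Suc i mod 3 \<or> i = Suc j mod 3" using that by presburger
      thus ?thesis using F1[of i j] that n3' by simp
    qed
    have rcs: "r 0 \<in> carrier R" "r 1 \<in> carrier R" "r 2 \<in> carrier R"
      using rc lt by auto
    have k3: "\<And>k. k < 3 \<Longrightarrow> k = 0 \<or> k = 1 \<or> k = (2::nat)" by arith
    have H: "\<exists>e\<in>{r 0, r 1, r 2}. \<forall>w\<in>carrier R. s \<otimes> w = \<zero> \<longleftrightarrow> e \<otimes> w = \<zero>"
      if sZ: "s \<in> nz_zero_divisors R" for s
    proof -
      obtain k where "k<n" "\<forall>w\<in>carrier R. s \<otimes> w = \<zero> \<longleftrightarrow> r k \<otimes> w = \<zero>"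
        using F2[of s] sZ unfolding Z_def by blast
      thus ?thesis using k3 n3' by auto
    qed
    have T2: "\<not> (r i \<otimes> r i = \<zero> \<and> r j \<otimes> r j = \<zero>)" if ij: "i<3" "j<3" "i\<noteq>j" for i j
    proof
      assume h: "r i \<otimes> r i = \<zero> \<and> r j \<otimes> r j = \<zero>"
      have "ann R (r i) \<subseteq> ann R (r j)"
      proof (rule SUB)
        show "i<n" "j<n" using ij n3' by auto
        show "\<forall>k<n. r k \<otimes> r i = \<zero> \<longrightarrow> r k \<otimes> r j = \<zero>"
        proof (intro allI impI)
          fix k assume kk: "k<n" "r k \<otimes> r i = \<zero>"
          show "r k \<otimes> r j = \<zero>"
          proof (cases "k = j")
            case True thus ?thesis using h by simp
          next
            case False thus ?thesis using P[of k j] kk ij n3' by simp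
          qed
        qed
      qed
      moreover have "ann R (r j) \<subseteq> ann R (r i)"
      proof (rule SUB)
        show "j<n" "i<n" using ij n3' by auto
        show "\<forall>k<n. r k \<otimes> r j = \<zero> \<longrightarrow> r k \<otimes> r i = \<zero>"
        proof (intro allI impI)
          fix k assume kk: "k<n" "r k \<otimes> r j = \<zero>"
          show "r k \<otimes> r i = \<zero>"
          proof (cases "k = i")
            case True thus ?thesis using h by simp
          next
            case False thus ?thesis using P[of k i] kk ij n3' by simp
          qed
        qed
      qed
      ultimately show False using F3[of i j] ij n3' by auto
    qed
    have nz: "r 0 \<noteq> \<zero>" "r 1 \<noteq> \<zero>" "r 2 \<noteq> \<zero>" using rnz lt by auto
    have pp: "r 0 \<otimes> r 1 = \<zero>" "r 0 \<otimes> r 2 = \<zero>" "r 1 \<otimes> r 2 = \<zero>"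
      "r 1 \<otimes> r 0 = \<zero>" "r 2 \<otimes> r 0 = \<zero>" "r 2 \<otimes> r 1 = \<zero>"
      using P by auto
    have t01: "\<not> (r 0 \<otimes> r 0 \<noteq> \<zero> \<and> r 1 \<otimes> r 1 \<noteq> \<zero>)"
      using TRI1[OF cR rcs(1,2,3)] pp nz H by blast
    have t02: "\<not> (r 0 \<otimes> r 0 \<noteq> \<zero> \<and> r 2 \<otimes> r 2 \<noteq> \<zero>)"
      using TRI1[OF cR rcs(1,3,2)] pp nz H by blast
    have t12: "\<not> (r 1 \<otimes> r 1 \<noteq> \<zero> \<and> r 2 \<otimes> r 2 \<noteq> \<zero>)"
      using TRI1[OF cR rcs(2,3,1)] pp nz H by blast
    have False using t01 t02 t12 T2[of 0 1] T2[of 0 2] T2[of 1 2] by auto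
  }
  ultimately show False by blast
qed

end
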